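(* Let $G$ be a digraph and let $\alpha^{(n+1)}>\gamma^{(n)}>\beta^{(n-1)}$ be allowed elementary paths on $G$ (of lengths $n+1,n,n-1$). Write $\alpha=v_0v_1\cdots v_{n+1}$. Then either (a) there exists an allowed elementary $n$-path $\gamma'\neq\gamma$ with $\alpha>\gamma'>\beta$; or (b) $\beta$ is obtained from $\alpha$ by removing two subsequent vertices $v_i\to v_{i+1}$ for some $0\le i\le n$.
   Context: A digraph $G=(V,E)$ consists of a set $V$ and $E\subseteq(V\times V)\setminus\{(v,v)\}$; $(u,v)\in E$ is written $u\to v$. An allowed elementary $n$-path is a sequence $v_0\cdots v_n$ of vertices with $v_{i-1}\to v_i\in E$ for $1\le i\le n$. For allowed elementary paths, $\gamma'<\gamma$ (equivalently $\gamma>\gamma'$) means $\gamma'$ is obtained from $\gamma$ by deleting some of its entries. *)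

theory Defs
  imports Main "HOL-Library.Sublist"
begin

definition digraph :: "'v set \<Rightarrow> ('v \<times> 'v) set \<Rightarrow> bool" where
  "digraph V E \<longleftrightarrow> E \<subseteq> (V \<times> V) - {(v, v) | v. True}"

definition allowed_path :: "'v set \<Rightarrow> ('v \<times> 'v) set \<Rightarrow> nat \<Rightarrow> 'v list \<Rightarrow> bool" where
  "allowed_path V E n p \<longleftrightarrow> length p = Suc n \<and> set p \<subseteq> V \<and>
     (\<forall>i<n. (p ! i, p ! Suc i) \<in> E)"

definition path_less :: "'v list \<Rightarrow> 'v list \<Rightarrow> bool" where
  "path_less q p \<longleftrightarrow> strict_subseq q p"

end

theory Submission
  imports Defs
begin

definition del :: "nat \<Rightarrow> 'a list \<Rightarrow> 'a list" where
  "del i xs = take i xs @ drop (Suc i) xs"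

lemma del_length: "i < length xs \<Longrightarrow> length (del i xs) = length xs - 1"
  by (simp add: del_def)

lemma del_nth: "i < length xs \<Longrightarrow> j < length xs - 1 \<Longrightarrow>
   del i xs ! j = (if j < i then xs ! j else xs ! Suc j)"
  by (auto simp: del_def nth_append min_def)

lemma del_subseq: "subseq (del i xs) xs"
proof -
  have "subseq (drop (Suc i) xs) (drop i xs)"
  proof (cases "i < length xs")
    case True
    then have "drop i xs = [xs ! i] @ drop (Suc i) xs" by (simp add: Cons_nth_drop_Suc)
    then show ?thesis by (metis subseq_drop_many subseq_order.refl)
  qed simp
  then show ?thesis unfolding del_def
    by (metis append_take_drop_id subseq_append')
qed

lemma del_set: "set (del i xs) \<subseteq> set xs"
  unfolding del_def by (metis append_take_drop_id set_append set_drop_subset_set_drop le_SucI Un_mono order_refl)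

lemma subseq_del_ex:
  "subseq xs ys \<Longrightarrow> length ys = Suc (length xs) \<Longrightarrow> \<exists>i<length ys. xs = del i ys"
proof (induction ys arbitrary: xs)
  case Nil then show ?case by simp
next
  case (Cons y ys)
  note IH = Cons.IH and sub = Cons.prems(1) and len = Cons.prems(2)
  show ?case
  proof (cases xs)
    case Nil
    then show ?thesis using len by (auto simp: del_def)
  next
    case (Cons x xs')
    note xs = this
    show ?thesis
    proof (cases "x = y")
      case True
      then have s1: "subseq xs' ys" using xs sub by simp
      have l1: "length ys = Suc (length xs')" using len xs by simp
      obtain i where "i < length ys" "xs' = del i ys"
        using IH[OF s1 l1] by blast
      then show ?thesis using True xs
        by (intro exI[of _ "Suc i"]) (simp add: del_def)
    next
      case False
      then have "subseq xs ys" using xs sub by simp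
      then have "xs = ys" using subseq_same_length[of xs ys] len by simp
      then show ?thesis by (intro exI[of _ 0]) (simp add: del_def)
    qed
  qed
qed

lemma del_comm: assumes "a < b" "b < length xs" shows "del a (del b xs) = del (b - 1) (del a xs)"
proof (rule nth_equalityI)
  show "length (del a (del b xs)) = length (del (b - 1) (del a xs))"
    using assms by (simp add: del_length)
  fix i assume "i < length (del a (del b xs))"
  then have i: "i < length xs - 2" using assms by (simp add: del_length)
  have l1: "length (del b xs) = length xs - 1" "length (del a xs) = length xs - 1"
    using assms by (simp_all add: del_length)
  show "del a (del b xs) ! i = del (b - 1) (del a xs) ! i"
    using i assms l1 del_nth[of a "del b xs" i] del_nth[of b xs i] del_nth[of b xs "Suc i"]
      del_nth[of "b - 1" "del a xs" i] del_nth[of a xs i] del_nth[of a xs "Suc i"]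
    by auto
qed

lemma del_adj: "Suc a < length xs \<Longrightarrow> del a (del (Suc a) xs) = take a xs @ drop (a + 2) xs"
  unfolding del_def by (simp add: min_def take_drop drop_take)

lemma strict_of_len: "subseq xs ys \<Longrightarrow> length ys = Suc (length xs) \<Longrightarrow> strict_subseq xs ys"
  unfolding strict_subseq_def by auto

theorem proposition2p3:
  fixes V :: "'v set" and E :: "('v \<times> 'v) set" and n :: nat
    and \<alpha> \<gamma> \<beta> :: "'v list"
  assumes "digraph V E"
    and "n \<ge> 1"
    and "allowed_path V E (n + 1) \<alpha>"
    and "allowed_path V E n \<gamma>"
    and "allowed_path V E (n - 1) \<beta>"
    and "path_less \<gamma> \<alpha>"
    and "path_less \<beta> \<gamma>"
  shows "(\<exists>\<gamma>'. allowed_path V E n \<gamma>' \<and> \<gamma>' \<noteq> \<gamma> \<and> path_less \<gamma>' \<alpha> \<and> path_less \<beta> \<gamma>')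
      \<or> (\<exists>i\<le>n. \<beta> = take i \<alpha> @ drop (i + 2) \<alpha>)"
proof -
  have la: "length \<alpha> = n + 2" and lg: "length \<gamma> = n + 1" and lb: "length \<beta> = n"
    using assms(2-5) by (auto simp: allowed_path_def)
  have Ea: "\<And>i. i < n + 1 \<Longrightarrow> (\<alpha> ! i, \<alpha> ! Suc i) \<in> E"
    using assms(3) by (auto simp: allowed_path_def)
  have Eb: "\<And>i. i < n - 1 \<Longrightarrow> (\<beta> ! i, \<beta> ! Suc i) \<in> E"
    using assms(5) by (auto simp: allowed_path_def)
  have Va: "set \<alpha> \<subseteq> V" using assms(3) by (auto simp: allowed_path_def)
  have noloop: "\<And>u. (u, u) \<notin> E" using assms(1) by (auto simp: digraph_def)
  obtain p where p: "p < n + 2" "\<gamma> = del p \<alpha>"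
    using subseq_del_ex[of \<gamma> \<alpha>] assms(6) la lg by (auto simp: path_less_def strict_subseq_def)
  obtain q where q: "q < n + 1" "\<beta> = del q \<gamma>"
    using subseq_del_ex[of \<beta> \<gamma>] assms(7) lb lg by (auto simp: path_less_def strict_subseq_def)
  obtain a b where ab: "a < b" "b < n + 2" "\<beta> = del a (del b \<alpha>)" "\<gamma> = del a \<alpha> \<or> \<gamma> = del b \<alpha>"
  proof (cases "q < p")
    case True
    then show ?thesis using that[of q p] p q by auto
  next
    case False
    then have "\<beta> = del p (del (Suc q) \<alpha>)" using p q del_comm[of p "Suc q" \<alpha>] la by auto
    then show ?thesis using that[of p "Suc q"] p q False by auto
  qed
  show ?thesis
  proof (cases "b = Suc a")
    case True
    then show ?thesis using ab del_adj[of a \<alpha>] la by (intro disjI2 exI[of _ a]) auto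
  next
    case False
    hence ab2: "Suc a < b" using ab by auto
    have bnth: "\<And>i. i < n \<Longrightarrow> \<beta> ! i = (if i < a then \<alpha> ! i else if Suc i < b then \<alpha> ! Suc i else \<alpha> ! Suc (Suc i))"
    proof -
      fix i assume i: "i < n"
      have l: "length (del b \<alpha>) = n + 1" using ab la by (simp add: del_length)
      have e1: "del a (del b \<alpha>) ! i = (if i < a then del b \<alpha> ! i else del b \<alpha> ! Suc i)"
        by (rule del_nth) (use i l ab in simp_all)
      have e2: "del b \<alpha> ! i = (if i < b then \<alpha> ! i else \<alpha> ! Suc i)"
        by (rule del_nth) (use i la ab in simp_all)
      have e3: "del b \<alpha> ! Suc i = (if Suc i < b then \<alpha> ! Suc i else \<alpha> ! Suc (Suc i))"
        by (rule del_nth) (use i la ab in simp_all)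
      have ab': "a < b" using ab by simp
      show "?thesis i"
        unfolding ab(3) e1 e2 e3 using ab' by simp
    qed
    have allowed: "allowed_path V E n (del r \<alpha>)" if r: "r = a \<or> r = b" for r
    proof -
      have "length (del r \<alpha>) = Suc n" proof -
        have "r < length \<alpha>" using r ab la by auto
        then show ?thesis using la del_length[of r \<alpha>] by simp
      qed
      moreover have "set (del r \<alpha>) \<subseteq> V" using del_set[of r \<alpha>] Va by (rule order_trans)
      moreover have "(del r \<alpha> ! i, del r \<alpha> ! Suc i) \<in> E" if i: "i < n" for i
      proof -
        have dn: "\<And>j. j < n + 1 \<Longrightarrow> del r \<alpha> ! j = (if j < r then \<alpha> ! j else \<alpha> ! Suc j)"
          using r ab la del_nth[of r \<alpha>] by auto
        consider "Suc i < r" | "i \<ge> r" | "Suc i = r" by linarith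
        then show ?thesis
        proof cases
          case 1 then show ?thesis using dn[of i] dn[of "Suc i"] i Ea[of i] by auto
        next
          case 2 then show ?thesis using dn[of i] dn[of "Suc i"] i Ea[of "Suc i"] by auto
        next
          case 3
          then have e: "del r \<alpha> ! i = \<alpha> ! i" "del r \<alpha> ! Suc i = \<alpha> ! Suc (Suc i)"
            using dn[of i] dn[of "Suc i"] i by auto
          show ?thesis
          proof (cases "r = a")
            case True
            then have "i < n - 1" using 3 ab2 ab i by linarith
            then show ?thesis using e Eb[of i] bnth[of i] bnth[of "Suc i"] 3 True ab2 by auto
          next
            case False
            then have rb: "r = b" using r by auto
            have i1: "i - 1 < n - 1" "Suc (i - 1) = i" "i - 1 < n" "\<not> i - 1 < a" "i - 1 < i"
              using 3 rb ab2 i by linarith+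
            have "\<beta> ! (i - 1) = \<alpha> ! i" using bnth[of "i - 1"] i1 3 rb by simp
            moreover have "\<beta> ! i = \<alpha> ! Suc (Suc i)" using bnth[of i] i 3 rb ab2 by simp
            ultimately show ?thesis using e Eb[of "i - 1"] i1 by simp
          qed
        qed
      qed
      ultimately show ?thesis by (simp add: allowed_path_def)
    qed
    have neq: "del a \<alpha> \<noteq> del b \<alpha>"
    proof
      assume h: "del a \<alpha> = del b \<alpha>"
      have "del a \<alpha> ! a = \<alpha> ! Suc a" "del b \<alpha> ! a = \<alpha> ! a"
        using ab ab2 la del_nth[of a \<alpha> a] del_nth[of b \<alpha> a] by auto
      then have "\<alpha> ! Suc a = \<alpha> ! a" using h by simp
      moreover have "a < n + 1" using ab by simp
      ultimately show False using Ea[of a] noloop by auto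
    qed
    have sa: "path_less (del r \<alpha>) \<alpha>" if "r = a \<or> r = b" for r
    proof -
      have "r < length \<alpha>" using that ab la by auto
      then have "length \<alpha> = Suc (length (del r \<alpha>))" using del_length[of r \<alpha>] la by simp
      then show ?thesis unfolding path_less_def by (rule strict_of_len[OF del_subseq])
    qed
    have lb': "length (del b \<alpha>) = Suc (length \<beta>)" using del_length[of b \<alpha>] la lb ab by simp
    have la': "length (del a \<alpha>) = Suc (length \<beta>)" using del_length[of a \<alpha>] la lb ab by simp
    have sb1: "path_less \<beta> (del b \<alpha>)"
      unfolding path_less_def ab(3) using strict_of_len[OF del_subseq lb'[unfolded ab(3)]] .
    have bb: "\<beta> = del (b - 1) (del a \<alpha>)" using ab la del_comm[of a b \<alpha>] by simp
    have sb2: "path_less \<beta> (del a \<alpha>)"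
      unfolding path_less_def bb using strict_of_len[OF del_subseq la'[unfolded bb]] .
    show ?thesis
    proof (cases "\<gamma> = del a \<alpha>")
      case True
      have "allowed_path V E n (del b \<alpha>) \<and> del b \<alpha> \<noteq> \<gamma> \<and> path_less (del b \<alpha>) \<alpha> \<and> path_less \<beta> (del b \<alpha>)"
        using allowed[of b] neq sa[of b] sb1 True by simp
      then show ?thesis by (rule disjI1[OF exI])
    next
      case False
      then have g: "\<gamma> = del b \<alpha>" using ab by simp
      have "allowed_path V E n (del a \<alpha>) \<and> del a \<alpha> \<noteq> \<gamma> \<and> path_less (del a \<alpha>) \<alpha> \<and> path_less \<beta> (del a \<alpha>)"
        using allowed[of a] neq sa[of a] sb2 g by simp
      then show ?thesis by (rule disjI1[OF exI])
    qed
  qed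
qed

end
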